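(* Let $\Gamma_1$ be a connected highly-regular graph which is not distance-regular, and let $\Gamma_2$ be a connected highly-regular graph. Then the Cartesian product $\Gamma_1\Box\Gamma_2$ is a connected highly-regular graph which is not distance-regular.
   Context: The Cartesian product $\Gamma_1\Box\Gamma_2$ has vertex set $V(\Gamma_1)\times V(\Gamma_2)$, with $(u_1,v_1)\sim(u_2,v_2)$ iff ($u_1=u_2$ and $v_1\sim v_2$) or ($v_1=v_2$ and $u_1\sim u_2$). A graph $\Gamma$ of order $n$ is highly-regular with collapsed adjacency matrix $C=[c_{i,j}]_{1\le i,j\le m}$, where $2\le m<n$ (the value $m=n$ allowed only when $n=2$), if for every vertex $u$ there is a partition of $V(\Gamma)$ into nonempty sets $V_1(u)=\{u\},\dots,V_m(u)$ such that every $y\in V_j(u)$ is adjacent to exactly $c_{i,j}$ vertices of $V_i(u)$. A connected graph is distance-regular if for all $u,v$ the numbers $|D_1(v)\cap D_{i-1}(u)|$, $|D_1(v)\cap D_i(u)|$, $|D_1(v)\cap D_{i+1}(u)|$ depend only on $i=d(u,v)$, where $D_i(u)=\{v:d(u,v)=i\}$. *)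

theory Defs
  imports Main
begin

definition simple_graph :: "'a set \<Rightarrow> ('a \<Rightarrow> 'a \<Rightarrow> bool) \<Rightarrow> bool" where
  "simple_graph V E \<longleftrightarrow> finite V \<and> (\<forall>x y. E x y \<longrightarrow> x \<in> V \<and> y \<in> V)
     \<and> (\<forall>x y. E x y \<longrightarrow> E y x) \<and> (\<forall>x. \<not> E x x)"

definition is_walk :: "'a set \<Rightarrow> ('a \<Rightarrow> 'a \<Rightarrow> bool) \<Rightarrow> 'a list \<Rightarrow> bool" where
  "is_walk V E xs \<longleftrightarrow> xs \<noteq> [] \<and> set xs \<subseteq> V \<and>
     (\<forall>i. Suc i < length xs \<longrightarrow> E (xs ! i) (xs ! Suc i))"

definition connected_graph :: "'a set \<Rightarrow> ('a \<Rightarrow> 'a \<Rightarrow> bool) \<Rightarrow> bool" where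
  "connected_graph V E \<longleftrightarrow> V \<noteq> {} \<and>
     (\<forall>u\<in>V. \<forall>v\<in>V. \<exists>xs. is_walk V E xs \<and> hd xs = u \<and> last xs = v)"

definition gdist :: "'a set \<Rightarrow> ('a \<Rightarrow> 'a \<Rightarrow> bool) \<Rightarrow> 'a \<Rightarrow> 'a \<Rightarrow> nat" where
  "gdist V E u v = (LEAST n. \<exists>xs. is_walk V E xs \<and> hd xs = u \<and> last xs = v \<and> length xs = Suc n)"

definition dist_set :: "'a set \<Rightarrow> ('a \<Rightarrow> 'a \<Rightarrow> bool) \<Rightarrow> 'a \<Rightarrow> nat \<Rightarrow> 'a set" where
  "dist_set V E u i = {v \<in> V. gdist V E u v = i}"

definition nbhd :: "'a set \<Rightarrow> ('a \<Rightarrow> 'a \<Rightarrow> bool) \<Rightarrow> 'a \<Rightarrow> 'a set" where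
  "nbhd V E v = {w \<in> V. E v w}"

text \<open>Distance-regular: connected, and |D_1(v) \<inter> D_{i-1}(u)|, |D_1(v) \<inter> D_i(u)|,
|D_1(v) \<inter> D_{i+1}(u)| depend only on i = d(u,v).  (For i = 0 the set D_{i-1}(u)
is empty; here i - 1 = 0 gives D_0(u) = {u}, and D_1(u) \<inter> {u} = {} anyway.)\<close>
definition distance_regular :: "'a set \<Rightarrow> ('a \<Rightarrow> 'a \<Rightarrow> bool) \<Rightarrow> bool" where
  "distance_regular V E \<longleftrightarrow> connected_graph V E \<and>
     (\<forall>u\<in>V. \<forall>v\<in>V. \<forall>u'\<in>V. \<forall>v'\<in>V. gdist V E u v = gdist V E u' v' \<longrightarrow>
        (let i = gdist V E u v in
          card (nbhd V E v \<inter> dist_set V E u (i - 1)) = card (nbhd V E v' \<inter> dist_set V E u' (i - 1)) \<and>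
          card (nbhd V E v \<inter> dist_set V E u i) = card (nbhd V E v' \<inter> dist_set V E u' i) \<and>
          card (nbhd V E v \<inter> dist_set V E u (Suc i)) = card (nbhd V E v' \<inter> dist_set V E u' (Suc i))))"

definition highly_regular_with :: "'a set \<Rightarrow> ('a \<Rightarrow> 'a \<Rightarrow> bool) \<Rightarrow> nat \<Rightarrow> (nat \<Rightarrow> nat \<Rightarrow> nat) \<Rightarrow> bool" where
  "highly_regular_with V E m C \<longleftrightarrow>
     2 \<le> m \<and> (m < card V \<or> (m = card V \<and> card V = 2)) \<and>
     (\<forall>u\<in>V. \<exists>P :: nat \<Rightarrow> 'a set.
        (\<forall>i\<in>{1..m}. P i \<noteq> {} \<and> P i \<subseteq> V) \<and>
        (\<forall>i\<in>{1..m}. \<forall>j\<in>{1..m}. i \<noteq> j \<longrightarrow> P i \<inter> P j = {}) \<and>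
        (\<Union>i\<in>{1..m}. P i) = V \<and>
        P 1 = {u} \<and>
        (\<forall>i\<in>{1..m}. \<forall>j\<in>{1..m}. \<forall>y\<in>P j. card {x \<in> P i. E y x} = C i j))"

definition highly_regular :: "'a set \<Rightarrow> ('a \<Rightarrow> 'a \<Rightarrow> bool) \<Rightarrow> bool" where
  "highly_regular V E \<longleftrightarrow> (\<exists>m C. highly_regular_with V E m C)"

definition cart_prod_adj :: "('a \<Rightarrow> 'a \<Rightarrow> bool) \<Rightarrow> ('b \<Rightarrow> 'b \<Rightarrow> bool) \<Rightarrow> 'a \<times> 'b \<Rightarrow> 'a \<times> 'b \<Rightarrow> bool" where
  "cart_prod_adj E1 E2 p q \<longleftrightarrow>
     (fst p = fst q \<and> E2 (snd p) (snd q)) \<or> (snd p = snd q \<and> E1 (fst p) (fst q))"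

end

theory Submission
  imports Defs
begin


lemma is_walk_Nil[simp]: "\<not> is_walk V E []"
  by (simp add: is_walk_def)

lemma is_walk_single[simp]: "is_walk V E [x] \<longleftrightarrow> x \<in> V"
  by (simp add: is_walk_def)

lemma is_walk_Cons2[simp]: "is_walk V E (x#y#xs) \<longleftrightarrow> x \<in> V \<and> E x y \<and> is_walk V E (y#xs)"
proof
  assume h: "is_walk V E (x#y#xs)"
  have "\<And>i. Suc i < length (y#xs) \<Longrightarrow> E ((y#xs) ! i) ((y#xs) ! Suc i)"
  proof -
    fix i assume "Suc i < length (y#xs)"
    then have "Suc (Suc i) < length (x#y#xs)" by simp
    then have "E ((x#y#xs) ! Suc i) ((x#y#xs) ! Suc (Suc i))" using h unfolding is_walk_def by blast
    then show "E ((y#xs) ! i) ((y#xs) ! Suc i)" by simp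
  qed
  moreover have "E x y" using h unfolding is_walk_def by (metis length_Cons nth_Cons_0 nth_Cons_Suc zero_less_Suc Suc_less_eq)
  ultimately show "x \<in> V \<and> E x y \<and> is_walk V E (y#xs)" using h unfolding is_walk_def by auto
next
  assume h: "x \<in> V \<and> E x y \<and> is_walk V E (y#xs)"
  show "is_walk V E (x#y#xs)" unfolding is_walk_def
  proof (intro conjI allI impI)
    show "set (x # y # xs) \<subseteq> V" using h unfolding is_walk_def by auto
    fix i assume i: "Suc i < length (x#y#xs)"
    show "E ((x # y # xs) ! i) ((x # y # xs) ! Suc i)"
    proof (cases i)
      case 0 then show ?thesis using h by simp
    next
      case (Suc j)
      then have "Suc j < length (y#xs)" using i by simp
      then have "E ((y#xs) ! j) ((y#xs) ! Suc j)" using h unfolding is_walk_def by blast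
      then show ?thesis using Suc by simp
    qed
  qed simp
qed

lemma walk_set: "is_walk V E xs \<Longrightarrow> set xs \<subseteq> V" by (simp add: is_walk_def)

lemma walk_append: "is_walk V E xs \<Longrightarrow> is_walk V E ys \<Longrightarrow> last xs = hd ys \<Longrightarrow> is_walk V E (xs @ tl ys)"
proof (induction xs)
  case Nil then show ?case by simp
next
  case (Cons x xs)
  show ?case
  proof (cases xs)
    case Nil
    then show ?thesis using Cons by (cases ys) auto
  next
    case (Cons y zs)
    have "is_walk V E (xs @ tl ys)" using Cons.IH Cons.prems \<open>xs = y#zs\<close> by auto
    then show ?thesis using Cons.prems \<open>xs = y#zs\<close> by auto
  qed
qed

lemma last_append_tl: "ys \<noteq> [] \<Longrightarrow> xs \<noteq> [] \<Longrightarrow> last xs = hd ys \<Longrightarrow> last (xs @ tl ys) = last ys"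
  by (cases ys) (auto simp: last_append)

lemma walk_map: "is_walk V E xs \<Longrightarrow> (\<And>x y. E x y \<Longrightarrow> E' (f x) (f y)) \<Longrightarrow> f ` V \<subseteq> V'
   \<Longrightarrow> is_walk V' E' (map f xs)"
  unfolding is_walk_def by auto blast

lemma gdist_le: "is_walk V E xs \<Longrightarrow> hd xs = u \<Longrightarrow> last xs = v \<Longrightarrow> gdist V E u v \<le> length xs - 1"
  unfolding gdist_def
  by (rule Least_le) (cases xs, auto)

lemma gdist_ex: "connected_graph V E \<Longrightarrow> u \<in> V \<Longrightarrow> v \<in> V \<Longrightarrow>
   \<exists>xs. is_walk V E xs \<and> hd xs = u \<and> last xs = v \<and> length xs = Suc (gdist V E u v)"
proof -
  assume c: "connected_graph V E" and uv: "u \<in> V" "v \<in> V"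
  then obtain xs where xs: "is_walk V E xs" "hd xs = u" "last xs = v" unfolding connected_graph_def by blast
  then have "\<exists>n xs. is_walk V E xs \<and> hd xs = u \<and> last xs = v \<and> length xs = Suc n"
    by (intro exI[of _ "length xs - 1"] exI[of _ xs]) (cases xs, auto)
  then show ?thesis unfolding gdist_def by (rule LeastI_ex)
qed

lemma gdist_refl[simp]: "u \<in> V \<Longrightarrow> gdist V E u u = 0"
  using gdist_le[of V E "[u]" u u] by simp

lemma gdist_zero: "connected_graph V E \<Longrightarrow> u \<in> V \<Longrightarrow> v \<in> V \<Longrightarrow> gdist V E u v = 0 \<Longrightarrow> u = v"
proof -
  assume a: "connected_graph V E" "u \<in> V" "v \<in> V" "gdist V E u v = 0"
  then obtain xs where "is_walk V E xs" "hd xs = u" "last xs = v" "length xs = Suc 0"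
    using gdist_ex by fastforce
  then show "u = v" by (cases xs) auto
qed

lemma gdist_step: "connected_graph V E \<Longrightarrow> E u v \<Longrightarrow> u \<in> V \<Longrightarrow> v \<in> V \<Longrightarrow> w \<in> V \<Longrightarrow>
   gdist V E u w \<le> Suc (gdist V E v w)"
proof -
  assume a: "connected_graph V E" "E u v" "u \<in> V" "v \<in> V" "w \<in> V"
  then obtain xs where xs: "is_walk V E xs" "hd xs = v" "last xs = w" "length xs = Suc (gdist V E v w)"
    using gdist_ex by metis
  then obtain zs where zs: "xs = v # zs" by (cases xs) auto
  have "is_walk V E (u # xs)" using xs zs a by simp
  from gdist_le[OF this, of u w] show ?thesis using xs zs by simp
qed

lemma gdist_adj: "simple_graph V E \<Longrightarrow> connected_graph V E \<Longrightarrow> E w y \<Longrightarrow> gdist V E w y = 1"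
proof -
  assume s: "simple_graph V E" and c: "connected_graph V E" and e: "E w y"
  have wy: "w \<in> V" "y \<in> V" "w \<noteq> y" using s e unfolding simple_graph_def by metis+
  have "gdist V E w y \<le> 1" using gdist_step[OF c e wy(1,2) wy(2)] wy by simp
  moreover have "gdist V E w y \<noteq> 0" using gdist_zero[OF c wy(1,2)] wy by blast
  ultimately show ?thesis by simp
qed



lemma sg_in: "simple_graph V E \<Longrightarrow> E x y \<Longrightarrow> x \<in> V \<and> y \<in> V"
  unfolding simple_graph_def by blast
lemma sg_sym: "simple_graph V E \<Longrightarrow> E x y \<Longrightarrow> E y x"
  unfolding simple_graph_def by blast
lemma sg_irr: "simple_graph V E \<Longrightarrow> \<not> E x x"
  unfolding simple_graph_def by blast

lemma prod_walk:
  assumes c1: "connected_graph V1 E1" and c2: "connected_graph V2 E2"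
    and a: "a \<in> V1" "c \<in> V1" and b: "b \<in> V2" "d \<in> V2"
  shows "\<exists>W. is_walk (V1 \<times> V2) (cart_prod_adj E1 E2) W \<and> hd W = (a,b) \<and> last W = (c,d)
     \<and> length W = Suc (gdist V1 E1 a c + gdist V2 E2 b d)"
proof -
  obtain xs where xs: "is_walk V1 E1 xs" "hd xs = a" "last xs = c" "length xs = Suc (gdist V1 E1 a c)"
    using gdist_ex[OF c1 a] by blast
  obtain ys where ys: "is_walk V2 E2 ys" "hd ys = b" "last ys = d" "length ys = Suc (gdist V2 E2 b d)"
    using gdist_ex[OF c2 b] by blast
  let ?A = "map (\<lambda>x. (x,b)) xs" and ?B = "map (\<lambda>y. (c,y)) ys"
  have wA: "is_walk (V1 \<times> V2) (cart_prod_adj E1 E2) ?A"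
    by (rule walk_map[OF xs(1)]) (use b in \<open>auto simp: cart_prod_adj_def\<close>)
  have wB: "is_walk (V1 \<times> V2) (cart_prod_adj E1 E2) ?B"
    by (rule walk_map[OF ys(1)]) (use a in \<open>auto simp: cart_prod_adj_def\<close>)
  have ne: "xs \<noteq> []" "ys \<noteq> []" using xs ys by auto
  have lh: "last ?A = hd ?B" using ne xs ys by (simp add: last_map hd_map)
  show ?thesis
    apply (rule exI[of _ "?A @ tl ?B"])
    using walk_append[OF wA wB lh] last_append_tl[of ?B ?A] lh ne xs ys
    by (auto simp: hd_append last_map hd_map)
qed

lemma prod_connected:
  assumes "connected_graph V1 E1" "connected_graph V2 E2"
  shows "connected_graph (V1 \<times> V2) (cart_prod_adj E1 E2)"
proof -
  have "V1 \<times> V2 \<noteq> {}" using assms unfolding connected_graph_def by auto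
  moreover have "\<forall>u\<in>V1 \<times> V2. \<forall>v\<in>V1 \<times> V2. \<exists>xs. is_walk (V1 \<times> V2) (cart_prod_adj E1 E2) xs \<and> hd xs = u \<and> last xs = v"
  proof (intro ballI)
    fix u v assume "u \<in> V1 \<times> V2" "v \<in> V1 \<times> V2"
    then show "\<exists>xs. is_walk (V1 \<times> V2) (cart_prod_adj E1 E2) xs \<and> hd xs = u \<and> last xs = v"
      using prod_walk[OF assms, of "fst u" "fst v" "snd u" "snd v"] by auto
  qed
  ultimately show ?thesis unfolding connected_graph_def by blast
qed

lemma prod_walk_lower:
  assumes s1: "simple_graph V1 E1" and s2: "simple_graph V2 E2"
    and c1: "connected_graph V1 E1" and c2: "connected_graph V2 E2"
  shows "is_walk (V1 \<times> V2) (cart_prod_adj E1 E2) xs \<Longrightarrow>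
    gdist V1 E1 (fst (hd xs)) (fst (last xs)) + gdist V2 E2 (snd (hd xs)) (snd (last xs)) \<le> length xs - 1"
proof (induction xs)
  case Nil then show ?case by simp
next
  case (Cons x xs)
  show ?case
  proof (cases xs)
    case Nil
    then show ?thesis using Cons.prems by (cases x) auto
  next
    case (Cons y zs)
    have wx: "x \<in> V1 \<times> V2" and e: "cart_prod_adj E1 E2 x y" and wy: "is_walk (V1 \<times> V2) (cart_prod_adj E1 E2) xs"
      using Cons.prems \<open>xs = y#zs\<close> by auto
    have IH: "gdist V1 E1 (fst y) (fst (last xs)) + gdist V2 E2 (snd y) (snd (last xs)) \<le> length zs"
      using Cons.IH[OF wy] \<open>xs = y#zs\<close> by simp
    have L: "last xs \<in> V1 \<times> V2" using walk_set[OF wy] \<open>xs = y#zs\<close> by auto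
    have Y: "y \<in> V1 \<times> V2" using walk_set[OF wy] \<open>xs = y#zs\<close> by auto
    from e consider "fst x = fst y" "E2 (snd x) (snd y)" | "snd x = snd y" "E1 (fst x) (fst y)"
      unfolding cart_prod_adj_def by blast
    then show ?thesis
    proof cases
      case 1
      have "gdist V2 E2 (snd x) (snd (last xs)) \<le> Suc (gdist V2 E2 (snd y) (snd (last xs)))"
        using gdist_step[OF c2 1(2)] wx Y L by auto
      then show ?thesis using IH 1 \<open>xs = y#zs\<close> by simp
    next
      case 2
      have "gdist V1 E1 (fst x) (fst (last xs)) \<le> Suc (gdist V1 E1 (fst y) (fst (last xs)))"
        using gdist_step[OF c1 2(2)] wx Y L by auto
      then show ?thesis using IH 2 \<open>xs = y#zs\<close> by simp
    qed
  qed
qed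

lemma prod_gdist:
  assumes s1: "simple_graph V1 E1" and s2: "simple_graph V2 E2"
    and c1: "connected_graph V1 E1" and c2: "connected_graph V2 E2"
    and a: "a \<in> V1" "c \<in> V1" and b: "b \<in> V2" "d \<in> V2"
  shows "gdist (V1 \<times> V2) (cart_prod_adj E1 E2) (a,b) (c,d) = gdist V1 E1 a c + gdist V2 E2 b d"
proof (rule antisym)
  obtain W where W: "is_walk (V1 \<times> V2) (cart_prod_adj E1 E2) W" "hd W = (a,b)" "last W = (c,d)"
     "length W = Suc (gdist V1 E1 a c + gdist V2 E2 b d)"
    using prod_walk[OF c1 c2 a b] by blast
  show "gdist (V1 \<times> V2) (cart_prod_adj E1 E2) (a,b) (c,d) \<le> gdist V1 E1 a c + gdist V2 E2 b d"
    using gdist_le[OF W(1-3)] W(4) by simp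
next
  obtain W where W: "is_walk (V1 \<times> V2) (cart_prod_adj E1 E2) W" "hd W = (a,b)" "last W = (c,d)"
     "length W = Suc (gdist (V1 \<times> V2) (cart_prod_adj E1 E2) (a,b) (c,d))"
    using gdist_ex[OF prod_connected[OF c1 c2], of "(a,b)" "(c,d)"] a b by blast
  show "gdist V1 E1 a c + gdist V2 E2 b d \<le> gdist (V1 \<times> V2) (cart_prod_adj E1 E2) (a,b) (c,d)"
    using prod_walk_lower[OF s1 s2 c1 c2 W(1)] W(2-4) by simp
qed



lemma prod_card:
  assumes s1: "simple_graph V1 E1" and s2: "simple_graph V2 E2"
    and c1: "connected_graph V1 E1" and c2: "connected_graph V2 E2"
    and uv: "u \<in> V1" "v \<in> V1" and w: "w \<in> V2"
  shows "card (nbhd (V1 \<times> V2) (cart_prod_adj E1 E2) (v,w) \<inter> dist_set (V1 \<times> V2) (cart_prod_adj E1 E2) (u,w) k)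
    = card (nbhd V1 E1 v \<inter> dist_set V1 E1 u k) + (if k = Suc (gdist V1 E1 u v) then card (nbhd V2 E2 w) else 0)"
proof -
  let ?A = "(\<lambda>x. (x,w)) ` (nbhd V1 E1 v \<inter> dist_set V1 E1 u k)"
  let ?B = "(if k = Suc (gdist V1 E1 u v) then (\<lambda>y. (v,y)) ` nbhd V2 E2 w else {})"
  have eq: "nbhd (V1 \<times> V2) (cart_prod_adj E1 E2) (v,w) \<inter> dist_set (V1 \<times> V2) (cart_prod_adj E1 E2) (u,w) k
      = ?A \<union> ?B"
  proof (rule set_eqI)
    fix p :: "'a \<times> 'b"
    obtain x y where p: "p = (x,y)" by (cases p)
    show "p \<in> nbhd (V1 \<times> V2) (cart_prod_adj E1 E2) (v,w) \<inter> dist_set (V1 \<times> V2) (cart_prod_adj E1 E2) (u,w) k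
       \<longleftrightarrow> p \<in> ?A \<union> ?B"
    proof -
      have g1: "x \<in> V1 \<Longrightarrow> gdist (V1 \<times> V2) (cart_prod_adj E1 E2) (u,w) (x,w) = gdist V1 E1 u x"
        using prod_gdist[OF s1 s2 c1 c2 uv(1) _ w w] w by simp
      have g2: "E2 w y \<Longrightarrow> gdist (V1 \<times> V2) (cart_prod_adj E1 E2) (u,w) (v,y) = Suc (gdist V1 E1 u v)"
      proof -
        assume ey: "E2 w y"
        then have "y \<in> V2" using sg_in[OF s2] by blast
        then show ?thesis using prod_gdist[OF s1 s2 c1 c2 uv w, of y] gdist_adj[OF s2 c2 ey] by simp
      qed
      show ?thesis
      proof
        assume h: "p \<in> nbhd (V1 \<times> V2) (cart_prod_adj E1 E2) (v,w) \<inter> dist_set (V1 \<times> V2) (cart_prod_adj E1 E2) (u,w) k"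
        then have xy: "x \<in> V1" "y \<in> V2" and e: "cart_prod_adj E1 E2 (v,w) (x,y)"
          and d: "gdist (V1 \<times> V2) (cart_prod_adj E1 E2) (u,w) (x,y) = k"
          by (auto simp: p nbhd_def dist_set_def)
        from e consider "v = x" "E2 w y" | "w = y" "E1 v x" unfolding cart_prod_adj_def by auto
        then show "p \<in> ?A \<union> ?B"
        proof cases
          case 1
          then have "k = Suc (gdist V1 E1 u v)" using g2 d by simp
          then show ?thesis using 1 xy by (auto simp: p nbhd_def)
        next
          case 2
          then show ?thesis using g1 d xy by (auto simp: p nbhd_def dist_set_def)
        qed
      next
        assume h: "p \<in> ?A \<union> ?B"
        then consider "y = w" "x \<in> nbhd V1 E1 v \<inter> dist_set V1 E1 u k"
          | "k = Suc (gdist V1 E1 u v)" "x = v" "y \<in> nbhd V2 E2 w"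
          by (auto simp: p split: if_splits)
        then show "p \<in> nbhd (V1 \<times> V2) (cart_prod_adj E1 E2) (v,w) \<inter> dist_set (V1 \<times> V2) (cart_prod_adj E1 E2) (u,w) k"
        proof cases
          case 1
          then show ?thesis using g1 w by (auto simp: p nbhd_def dist_set_def cart_prod_adj_def)
        next
          case 2
          then have "E2 w y" "y \<in> V2" by (auto simp: nbhd_def)
          then show ?thesis using g2 2 uv by (auto simp: p nbhd_def dist_set_def cart_prod_adj_def)
        qed
      qed
    qed
  qed
  have fin1: "finite V1" and fin2: "finite V2" using s1 s2 unfolding simple_graph_def by auto
  have disj: "?A \<inter> ?B = {}" using sg_irr[OF s2] by (auto simp: nbhd_def)
  have cA: "card ?A = card (nbhd V1 E1 v \<inter> dist_set V1 E1 u k)"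
    by (rule card_image) (auto simp: inj_on_def)
  have cB: "card ?B = (if k = Suc (gdist V1 E1 u v) then card (nbhd V2 E2 w) else 0)"
    by (auto intro!: card_image simp: inj_on_def)
  have fA: "finite ?A" using fin1 by (auto simp: nbhd_def)
  have fB: "finite ?B" using fin2 by (auto simp: nbhd_def)
  show ?thesis unfolding eq card_Un_disjoint[OF fA fB disj] cA cB ..
qed

lemma prod_not_dr:
  assumes s1: "simple_graph V1 E1" and s2: "simple_graph V2 E2"
    and c1: "connected_graph V1 E1" and c2: "connected_graph V2 E2"
    and nd: "\<not> distance_regular V1 E1"
  shows "\<not> distance_regular (V1 \<times> V2) (cart_prod_adj E1 E2)"
proof
  assume dr: "distance_regular (V1 \<times> V2) (cart_prod_adj E1 E2)"
  obtain w where w: "w \<in> V2" using c2 unfolding connected_graph_def by blast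
  from nd c1 obtain u v u' v' where q: "u \<in> V1" "v \<in> V1" "u' \<in> V1" "v' \<in> V1"
    "gdist V1 E1 u v = gdist V1 E1 u' v'" and
    ne: "\<not> (let i = gdist V1 E1 u v in
          card (nbhd V1 E1 v \<inter> dist_set V1 E1 u (i - 1)) = card (nbhd V1 E1 v' \<inter> dist_set V1 E1 u' (i - 1)) \<and>
          card (nbhd V1 E1 v \<inter> dist_set V1 E1 u i) = card (nbhd V1 E1 v' \<inter> dist_set V1 E1 u' i) \<and>
          card (nbhd V1 E1 v \<inter> dist_set V1 E1 u (Suc i)) = card (nbhd V1 E1 v' \<inter> dist_set V1 E1 u' (Suc i)))"
    unfolding distance_regular_def by blast
  let ?i = "gdist V1 E1 u v"
  have gp: "gdist (V1 \<times> V2) (cart_prod_adj E1 E2) (u,w) (v,w) = ?i"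
    "gdist (V1 \<times> V2) (cart_prod_adj E1 E2) (u',w) (v',w) = ?i"
    using prod_gdist[OF s1 s2 c1 c2 _ _ w w] q w by auto
  have "(u,w) \<in> V1 \<times> V2" "(v,w) \<in> V1 \<times> V2" "(u',w) \<in> V1 \<times> V2" "(v',w) \<in> V1 \<times> V2" using q w by auto
  note D = dr[unfolded distance_regular_def Let_def, THEN conjunct2, rule_format, OF this, unfolded gp]
  note P1 = prod_card[OF s1 s2 c1 c2 q(1,2) w] and P2 = prod_card[OF s1 s2 c1 c2 q(3,4) w]
  have e1: "card (nbhd V1 E1 v \<inter> dist_set V1 E1 u (?i - 1)) = card (nbhd V1 E1 v' \<inter> dist_set V1 E1 u' (?i - 1))"
    using D[THEN conjunct1] unfolding P1 P2 q(5) by simp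
  have e2: "card (nbhd V1 E1 v \<inter> dist_set V1 E1 u ?i) = card (nbhd V1 E1 v' \<inter> dist_set V1 E1 u' ?i)"
    using D[THEN conjunct2, THEN conjunct1] unfolding P1 P2 q(5) by simp
  have e3: "card (nbhd V1 E1 v \<inter> dist_set V1 E1 u (Suc ?i)) = card (nbhd V1 E1 v' \<inter> dist_set V1 E1 u' (Suc ?i))"
    using D[THEN conjunct2, THEN conjunct2] unfolding P1 P2 q(5) by simp
  show False using ne e1 e2 e3 unfolding Let_def by blast
qed



lemma count_prod:
  assumes irr: "\<And>x. \<not> E2 x x" and fA: "finite A" and fB: "finite B"
  shows "card {x \<in> A \<times> B. cart_prod_adj E1 E2 (y1,y2) x} =
    (if y2 \<in> B then card {x1\<in>A. E1 y1 x1} else 0) + (if y1 \<in> A then card {x2\<in>B. E2 y2 x2} else 0)"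
proof -
  let ?S = "(if y2 \<in> B then (\<lambda>x1. (x1,y2)) ` {x1\<in>A. E1 y1 x1} else {})"
  let ?T = "(if y1 \<in> A then (\<lambda>x2. (y1,x2)) ` {x2\<in>B. E2 y2 x2} else {})"
  have eq: "{x \<in> A \<times> B. cart_prod_adj E1 E2 (y1,y2) x} = ?S \<union> ?T"
    by (auto simp: cart_prod_adj_def)
  have disj: "?S \<inter> ?T = {}" using irr by auto
  have fin: "finite ?S" "finite ?T" using fA fB by auto
  have cS: "card ?S = (if y2 \<in> B then card {x1\<in>A. E1 y1 x1} else 0)"
    by (auto intro!: card_image simp: inj_on_def)
  have cT: "card ?T = (if y1 \<in> A then card {x2\<in>B. E2 y2 x2} else 0)"
    by (auto intro!: card_image simp: inj_on_def)
  show ?thesis unfolding eq card_Un_disjoint[OF fin disj] cS cT ..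
qed

lemma part_unique:
  assumes "\<forall>i\<in>{1..m}. \<forall>j\<in>{1..m}. i \<noteq> j \<longrightarrow> P i \<inter> P j = {}"
    and "i \<in> {1..m}" "j \<in> {1..m}" "x \<in> P i" "x \<in> P j"
  shows "i = j"
  using assms by blast

lemma idx_arith:
  fixes m1 m2 :: nat
  assumes "0 < m2"
  shows "k \<in> {1..m1*m2} \<Longrightarrow> (k - 1) div m2 + 1 \<in> {1..m1} \<and> (k - 1) mod m2 + 1 \<in> {1..m2}"
    and "k \<in> {1..m1*m2} \<Longrightarrow> l \<in> {1..m1*m2} \<Longrightarrow> (k - 1) div m2 = (l - 1) div m2 \<Longrightarrow> (k - 1) mod m2 = (l - 1) mod m2 \<Longrightarrow> k = l"
    and "a \<in> {1..m1} \<Longrightarrow> c \<in> {1..m2} \<Longrightarrow> (a - 1) * m2 + c \<in> {1..m1*m2} \<and>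
          ((a - 1) * m2 + c - 1) div m2 + 1 = a \<and> ((a - 1) * m2 + c - 1) mod m2 + 1 = c"
proof -
  assume k: "k \<in> {1..m1*m2}"
  then have "k - 1 < m1 * m2" by auto
  then have "(k - 1) div m2 < m1" by (simp add: less_mult_imp_div_less)
  then show "(k - 1) div m2 + 1 \<in> {1..m1} \<and> (k - 1) mod m2 + 1 \<in> {1..m2}"
    using assms by (auto simp: Suc_le_eq)
next
  assume "k \<in> {1..m1*m2}" "l \<in> {1..m1*m2}" "(k - 1) div m2 = (l - 1) div m2" "(k - 1) mod m2 = (l - 1) mod m2"
  then have "k - 1 = l - 1" by (metis div_mult_mod_eq)
  then show "k = l" using \<open>k \<in> _\<close> \<open>l \<in> _\<close> by auto
next
  assume a: "a \<in> {1..m1}" and c: "c \<in> {1..m2}"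
  have e: "(a - 1) * m2 + c - 1 = (c - 1) + m2 * (a - 1)" using c by (simp add: mult.commute)
  have "(a - 1) * m2 + c \<le> (a - 1) * m2 + m2" using c by auto
  also have "\<dots> = a * m2" using a by (cases a) auto
  also have "\<dots> \<le> m1 * m2" using a by auto
  finally have le: "(a - 1) * m2 + c \<le> m1 * m2" .
  have cl: "c - 1 < m2" using c by auto
  have g: "\<And>r q. r < m2 \<Longrightarrow> (r + m2 * q) div m2 = q \<and> (r + m2 * q) mod m2 = r"
    using assms by simp
  moreover have "((a - 1) * m2 + c - 1) div m2 = a - 1" unfolding e using g[OF cl] by blast
  moreover have "((a - 1) * m2 + c - 1) mod m2 = c - 1" unfolding e using g[OF cl] by blast
  ultimately show "(a - 1) * m2 + c \<in> {1..m1*m2} \<and>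
          ((a - 1) * m2 + c - 1) div m2 + 1 = a \<and> ((a - 1) * m2 + c - 1) mod m2 + 1 = c"
    using a c le by auto
qed



lemma prod_hr:
  assumes s1: "simple_graph V1 E1" and s2: "simple_graph V2 E2"
    and h1: "highly_regular_with V1 E1 m1 C1" and h2: "highly_regular_with V2 E2 m2 C2"
    and mlt: "m1 * m2 < card V1 * card V2"
  shows "highly_regular (V1 \<times> V2) (cart_prod_adj E1 E2)"
proof -
  have m2p: "0 < m2" and m1g: "2 \<le> m1" and m2g: "2 \<le> m2"
    using h1[unfolded highly_regular_with_def, THEN conjunct1] h2[unfolded highly_regular_with_def, THEN conjunct1] by auto
  have fin1: "finite V1" and fin2: "finite V2" and irr: "\<And>x. \<not> E2 x x"
    using s1 s2 unfolding simple_graph_def by auto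
  define fa where "fa k = (k - 1) div m2 + 1" for k :: nat
  define fc where "fc k = (k - 1) mod m2 + 1" for k :: nat
  define C where "C k l = (if fc k = fc l then C1 (fa k) (fa l) else 0) + (if fa k = fa l then C2 (fc k) (fc l) else 0)" for k l
  note ar = idx_arith[OF m2p, where ?m1.0=m1]
  have rng: "\<And>k. k \<in> {1..m1*m2} \<Longrightarrow> fa k \<in> {1..m1} \<and> fc k \<in> {1..m2}"
    using ar(1) unfolding fa_def fc_def by blast
  have inj: "\<And>k l. k \<in> {1..m1*m2} \<Longrightarrow> l \<in> {1..m1*m2} \<Longrightarrow> fa k = fa l \<Longrightarrow> fc k = fc l \<Longrightarrow> k = l"
    unfolding fa_def fc_def by (rule ar(2)) auto
  have sur: "\<And>a c. a \<in> {1..m1} \<Longrightarrow> c \<in> {1..m2} \<Longrightarrow> \<exists>k\<in>{1..m1*m2}. fa k = a \<and> fc k = c"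
    using ar(3) unfolding fa_def fc_def by blast
  have f1: "fa 1 = 1" "fc 1 = 1" unfolding fa_def fc_def by auto
  have "highly_regular_with (V1 \<times> V2) (cart_prod_adj E1 E2) (m1 * m2) C"
    unfolding highly_regular_with_def
  proof (intro conjI ballI)
    show "2 \<le> m1 * m2" using m1g m2g using mult_le_mono[of 1 m1 2 m2] by simp
    show "m1 * m2 < card (V1 \<times> V2) \<or> m1 * m2 = card (V1 \<times> V2) \<and> card (V1 \<times> V2) = 2"
      using mlt by (simp add: card_cartesian_product)
    fix u assume u: "u \<in> V1 \<times> V2"
    obtain P1 where P1: "\<forall>i\<in>{1..m1}. P1 i \<noteq> {} \<and> P1 i \<subseteq> V1"
      "\<forall>i\<in>{1..m1}. \<forall>j\<in>{1..m1}. i \<noteq> j \<longrightarrow> P1 i \<inter> P1 j = {}"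
      "(\<Union>i\<in>{1..m1}. P1 i) = V1" "P1 1 = {fst u}"
      "\<forall>i\<in>{1..m1}. \<forall>j\<in>{1..m1}. \<forall>y\<in>P1 j. card {x \<in> P1 i. E1 y x} = C1 i j"
      using h1[unfolded highly_regular_with_def, THEN conjunct2, THEN conjunct2, rule_format, of "fst u"] u
      by (auto elim!: exE conjE intro: that simp del: One_nat_def)
    obtain P2 where P2: "\<forall>i\<in>{1..m2}. P2 i \<noteq> {} \<and> P2 i \<subseteq> V2"
      "\<forall>i\<in>{1..m2}. \<forall>j\<in>{1..m2}. i \<noteq> j \<longrightarrow> P2 i \<inter> P2 j = {}"
      "(\<Union>i\<in>{1..m2}. P2 i) = V2" "P2 1 = {snd u}"
      "\<forall>i\<in>{1..m2}. \<forall>j\<in>{1..m2}. \<forall>y\<in>P2 j. card {x \<in> P2 i. E2 y x} = C2 i j"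
      using h2[unfolded highly_regular_with_def, THEN conjunct2, THEN conjunct2, rule_format, of "snd u"] u
      by (auto elim!: exE conjE intro: that simp del: One_nat_def)
    define P where "P k = P1 (fa k) \<times> P2 (fc k)" for k
    show "\<exists>P. (\<forall>i\<in>{1..m1 * m2}. P i \<noteq> {} \<and> P i \<subseteq> V1 \<times> V2) \<and>
         (\<forall>i\<in>{1..m1 * m2}. \<forall>j\<in>{1..m1 * m2}. i \<noteq> j \<longrightarrow> P i \<inter> P j = {}) \<and>
         \<Union> (P ` {1..m1 * m2}) = V1 \<times> V2 \<and>
         P 1 = {u} \<and>
         (\<forall>i\<in>{1..m1 * m2}. \<forall>j\<in>{1..m1 * m2}. \<forall>y\<in>P j. card {x \<in> P i. cart_prod_adj E1 E2 y x} = C i j)"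
    proof (intro exI[of _ P] conjI ballI impI)
      fix i assume i: "i \<in> {1..m1*m2}"
      show "P i \<noteq> {}" "P i \<subseteq> V1 \<times> V2" using rng[OF i] P1(1) P2(1) unfolding P_def by auto
    next
      fix i j assume i: "i \<in> {1..m1*m2}" and j: "j \<in> {1..m1*m2}" and ne: "i \<noteq> j"
      then have "fa i \<noteq> fa j \<or> fc i \<noteq> fc j" using inj by blast
      then show "P i \<inter> P j = {}" using rng[OF i] rng[OF j] P1(2) P2(2) unfolding P_def by blast
    next
      show "\<Union> (P ` {1..m1 * m2}) = V1 \<times> V2"
      proof
        show "\<Union> (P ` {1..m1 * m2}) \<subseteq> V1 \<times> V2" using rng P1(1) P2(1) unfolding P_def by blast
        show "V1 \<times> V2 \<subseteq> \<Union> (P ` {1..m1 * m2})"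
        proof
          fix x assume "x \<in> V1 \<times> V2"
          then obtain a c where a: "a \<in> {1..m1}" "fst x \<in> P1 a" and c: "c \<in> {1..m2}" "snd x \<in> P2 c"
            using P1(3) P2(3) by (metis SigmaE UN_iff fst_conv snd_conv)
          obtain k where "k \<in> {1..m1*m2}" "fa k = a" "fc k = c" using sur[OF a(1) c(1)] by blast
          then show "x \<in> \<Union> (P ` {1..m1 * m2})" using a c unfolding P_def by (cases x) auto
        qed
      qed
    next
      show "P 1 = {u}" unfolding P_def f1 P1(4) P2(4) by (cases u) auto
    next
      fix i j y assume i: "i \<in> {1..m1*m2}" and j: "j \<in> {1..m1*m2}" and y: "y \<in> P j"
      obtain y1 y2 where yy: "y = (y1,y2)" by (cases y)
      have y1: "y1 \<in> P1 (fa j)" and y2: "y2 \<in> P2 (fc j)" using y yy unfolding P_def by auto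
      have finA: "finite (P1 (fa i))" using P1(1) rng[OF i] fin1 finite_subset by blast
      have finB: "finite (P2 (fc i))" using P2(1) rng[OF i] fin2 finite_subset by blast
      have e1: "y2 \<in> P2 (fc i) \<longleftrightarrow> fc i = fc j" using part_unique[OF P2(2) conjunct2[OF rng[OF i]] conjunct2[OF rng[OF j]] _ y2] y2 by auto
      have e2: "y1 \<in> P1 (fa i) \<longleftrightarrow> fa i = fa j" using part_unique[OF P1(2) conjunct1[OF rng[OF i]] conjunct1[OF rng[OF j]] _ y1] y1 by auto
      have "card {x \<in> P i. cart_prod_adj E1 E2 y x} =
          (if y2 \<in> P2 (fc i) then card {x1\<in>P1 (fa i). E1 y1 x1} else 0) + (if y1 \<in> P1 (fa i) then card {x2\<in>P2 (fc i). E2 y2 x2} else 0)"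
        unfolding P_def yy by (rule count_prod[OF irr finA finB])
      also have "\<dots> = C i j"
      proof -
        have q1: "card {x1\<in>P1 (fa i). E1 y1 x1} = C1 (fa i) (fa j)"
          by (rule P1(5)[rule_format, OF conjunct1[OF rng[OF i]] conjunct1[OF rng[OF j]] y1])
        have q2: "card {x2\<in>P2 (fc i). E2 y2 x2} = C2 (fc i) (fc j)"
          by (rule P2(5)[rule_format, OF conjunct2[OF rng[OF i]] conjunct2[OF rng[OF j]] y2])
        show ?thesis unfolding C_def e1 e2 q1 q2 by (rule refl)
      qed
      finally show "card {x \<in> P i. cart_prod_adj E1 E2 y x} = C i j" .
    qed
  qed
  then show ?thesis unfolding highly_regular_def by blast
qed



lemma K2_dr:
  assumes s: "simple_graph V E" and c: "connected_graph V E" and card2: "card V = 2"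
  shows "distance_regular V E"
proof -
  obtain a b where V: "V = {a,b}" "a \<noteq> b" using card2 by (meson card_2_iff)
  have adj: "E x y" if xy: "x \<in> V" "y \<in> V" "x \<noteq> y" for x y
  proof -
    obtain xs where xs: "is_walk V E xs" "hd xs = x" "last xs = y"
      using c xy unfolding connected_graph_def by blast
    then obtain rest where r: "xs = x # rest" by (cases xs) auto
    then obtain z zs where rz: "rest = z # zs" using xs xy by (cases rest) auto
    have ez: "E x z" using xs r rz by simp
    have "z \<in> V" "z \<noteq> x" using sg_in[OF s ez] sg_irr[OF s] ez by auto
    then have "z = y" using xy V by auto
    then show ?thesis using ez by simp
  qed
  have G: "gdist V E x y = (if x = y then 0 else 1)" if "x \<in> V" "y \<in> V" for x y
    using that adj gdist_adj[OF s c] by auto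
  have key: "card (nbhd V E v \<inter> dist_set V E u k) =
      (if u = v then (if k = 1 then 1 else 0) else (if k = 0 then 1 else 0))"
    if uv: "u \<in> V" "v \<in> V" for u v k
  proof -
    have S: "nbhd V E v \<inter> dist_set V E u k = {x \<in> V. x \<noteq> v \<and> (if u = x then 0 else 1) = k}"
      using G uv adj sg_irr[OF s] by (auto simp: nbhd_def dist_set_def)
    show ?thesis
    proof (cases "u = v")
      case True
      then have "{x \<in> V. x \<noteq> v \<and> (if u = x then 0 else 1) = k} = (if k = 1 then V - {v} else {})"
        by auto
      moreover have "card (V - {v}) = 1" using card2 uv by (simp add: V(1))
      ultimately show ?thesis using S True by simp
    next
      case False
      then have "V = {u, v}" using uv V by auto
      then have "{x \<in> V. x \<noteq> v \<and> (if u = x then 0 else 1) = k} = (if k = 0 then {u} else {})"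
        using False by auto
      then show ?thesis using S False by simp
    qed
  qed
  show ?thesis unfolding distance_regular_def
  proof (intro conjI c ballI impI)
    fix u v u' v' assume m: "u \<in> V" "v \<in> V" "u' \<in> V" "v' \<in> V" and eq: "gdist V E u v = gdist V E u' v'"
    have "u = v \<longleftrightarrow> u' = v'" using eq G m by (auto split: if_splits)
    then show "let i = gdist V E u v in
       card (nbhd V E v \<inter> dist_set V E u (i - 1)) = card (nbhd V E v' \<inter> dist_set V E u' (i - 1)) \<and>
       card (nbhd V E v \<inter> dist_set V E u i) = card (nbhd V E v' \<inter> dist_set V E u' i) \<and>
       card (nbhd V E v \<inter> dist_set V E u (Suc i)) = card (nbhd V E v' \<inter> dist_set V E u' (Suc i))"
      unfolding Let_def key[OF m(1,2)] key[OF m(3,4)] by simp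
  qed
qed

theorem propositionA2:
  fixes V1 :: "'a set" and E1 :: "'a \<Rightarrow> 'a \<Rightarrow> bool"
    and V2 :: "'b set" and E2 :: "'b \<Rightarrow> 'b \<Rightarrow> bool"
  assumes "simple_graph V1 E1" and "simple_graph V2 E2"
    and "connected_graph V1 E1" and "highly_regular V1 E1" and "\<not> distance_regular V1 E1"
    and "connected_graph V2 E2" and "highly_regular V2 E2"
  shows "connected_graph (V1 \<times> V2) (cart_prod_adj E1 E2)
       \<and> highly_regular (V1 \<times> V2) (cart_prod_adj E1 E2)
       \<and> \<not> distance_regular (V1 \<times> V2) (cart_prod_adj E1 E2)"
proof (intro conjI)
  show "connected_graph (V1 \<times> V2) (cart_prod_adj E1 E2)" using prod_connected assms(3,6) by blast
  show "\<not> distance_regular (V1 \<times> V2) (cart_prod_adj E1 E2)"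
    using prod_not_dr assms(1,2,3,6,5) by blast
  obtain m1 C1 where h1: "highly_regular_with V1 E1 m1 C1" using assms(4) unfolding highly_regular_def by blast
  obtain m2 C2 where h2: "highly_regular_with V2 E2 m2 C2" using assms(7) unfolding highly_regular_def by blast
  have a1: "m1 < card V1 \<or> (m1 = card V1 \<and> card V1 = 2)" and a2: "m2 < card V2 \<or> (m2 = card V2 \<and> card V2 = 2)"
    and g2: "2 \<le> m2"
    using h1[unfolded highly_regular_with_def, THEN conjunct2, THEN conjunct1]
      h2[unfolded highly_regular_with_def, THEN conjunct2, THEN conjunct1]
      h2[unfolded highly_regular_with_def, THEN conjunct1] by auto
  have "card V1 \<noteq> 2" using K2_dr[OF assms(1,3)] assms(5) by blast
  then have lt: "m1 < card V1" using a1 by auto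
  have le: "m2 \<le> card V2" using a2 by auto
  have "m1 * m2 < card V1 * m2" using lt g2 by simp
  also have "\<dots> \<le> card V1 * card V2" using le by simp
  finally have "m1 * m2 < card V1 * card V2" .
  then show "highly_regular (V1 \<times> V2) (cart_prod_adj E1 E2)"
    using prod_hr[OF assms(1,2) h1 h2] by blast
qed

end
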